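(* Let $\alpha\in(0,1]$, $\lambda_\alpha=\sqrt{\log(1/\alpha)/2}$, $p_1,\dots,p_m\in[0,1]$, and consider the DKW local tests $\varphi_A=\max_{t\in[0,1]}\mathbf 1\{i_A(t)>|A|t+\sqrt{|A|}\lambda_\alpha\}$. Let $$\hat m_0=\min_{t\in[0,1)}\Big\lfloor\Big(\frac{\lambda_\alpha}{2(1-t)}+\sqrt{\frac{\lambda_\alpha^2}{4(1-t)^2}+\frac{m-i(t)}{1-t}}\Big)^2\Big\rfloor\wedge m,$$ let $\sigma$ be a permutation with $p_{\sigma(1)}\le\dots\le p_{\sigma(m)}$, $p_{(k)}=p_{\sigma(k)}$, $R_k=\{\sigma(1),\dots,\sigma(k)\}$, $\zeta_k=k\wedge\lfloor\hat m_0p_{(k)}+\sqrt{\hat m_0}\lambda_\alpha\rfloor$, and $\mathfrak R=(R_k,\zeta_k)_{1\le k\le m}$. Then $\hat V^{\mathrm{IP}}_\varphi(S)=\hat V^{\mathrm{JER}}_{\mathfrak R}(S)$ for every $S\subseteq\{1,\dots,m\}$.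
   Context: $i_A(t)=\#\{j\in A:p_j\le t\}$, $i(t)=i_{\{1,\dots,m\}}(t)$. $\hat V^{\mathrm{IP}}_\varphi(S)=\max\{|A\cap S|:A\subseteq\{1,\dots,m\},\varphi_A=0\}$. For a reference family $(R_k,\zeta_k)_{k\in\mathcal K}$: $\mathfrak A(\mathfrak R)=\{A\subseteq\{1,\dots,m\}:\forall k,|R_k\cap A|\le\zeta_k\}$ and $\hat V^{\mathrm{JER}}_{\mathfrak R}(S)=\max_{A\in\mathfrak A(\mathfrak R)}|S\cap A|$. *)

theory Defs
  imports Complex_Main
begin

text \<open>Hypotheses are indexed by {1..m}; p-values are a function p :: nat => real.\<close>

definition i_count :: "(nat \<Rightarrow> real) \<Rightarrow> nat set \<Rightarrow> real \<Rightarrow> nat" where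
  "i_count p A t = card {j \<in> A. p j \<le> t}"

definition lambda_alpha :: "real \<Rightarrow> real" where
  "lambda_alpha \<alpha> = sqrt (ln (1 / \<alpha>) / 2)"

definition dkw_test :: "real \<Rightarrow> (nat \<Rightarrow> real) \<Rightarrow> nat set \<Rightarrow> bool" where
  "dkw_test \<alpha> p A \<longleftrightarrow>
     (\<exists>t\<in>{0..1}. real (i_count p A t) > real (card A) * t + sqrt (real (card A)) * lambda_alpha \<alpha>)"

text \<open>V^IP_phi(S) = max{|A inter S| : A subset {1..m}, phi_A = 0}; phi given as predicate "phi A = 1".\<close>
definition V_IP :: "nat \<Rightarrow> (nat set \<Rightarrow> bool) \<Rightarrow> nat set \<Rightarrow> nat" where
  "V_IP m \<phi> S = Max {card (A \<inter> S) | A. A \<subseteq> {1..m} \<and> \<not> \<phi> A}"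

definition JER_sets :: "nat \<Rightarrow> 'k set \<Rightarrow> ('k \<Rightarrow> nat set) \<Rightarrow> ('k \<Rightarrow> int) \<Rightarrow> nat set set" where
  "JER_sets m K R \<zeta> = {A. A \<subseteq> {1..m} \<and> (\<forall>k\<in>K. int (card (R k \<inter> A)) \<le> \<zeta> k)}"

definition V_JER :: "nat \<Rightarrow> 'k set \<Rightarrow> ('k \<Rightarrow> nat set) \<Rightarrow> ('k \<Rightarrow> int) \<Rightarrow> nat set \<Rightarrow> nat" where
  "V_JER m K R \<zeta> S = Max {card (S \<inter> A) | A. A \<in> JER_sets m K R \<zeta>}"

text \<open>The estimator m0-hat: min over t in [0,1) of the floor expression, capped at m.
  The floored quantity is nonnegative, so it is taken in nat; the minimum is the
  least element (Inf) of the resulting nonempty set of naturals.\<close>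
definition m0_hat :: "real \<Rightarrow> nat \<Rightarrow> (nat \<Rightarrow> real) \<Rightarrow> nat" where
  "m0_hat \<alpha> m p = min m (Inf { nat \<lfloor>(lambda_alpha \<alpha> / (2 * (1 - t))
        + sqrt ((lambda_alpha \<alpha>)\<^sup>2 / (4 * (1 - t)\<^sup>2)
                + (real m - real (i_count p {1..m} t)) / (1 - t)))\<^sup>2\<rfloor> | t. 0 \<le> t \<and> t < 1 })"

end

theory Submission imports Defs begin

lemma quad_le:
  fixes u c l s :: real
  assumes "u>0" "c\<ge>0" "l\<ge>0" "s\<ge>0"
  shows "u*s^2 - l*s - c \<le> 0 \<longleftrightarrow> s \<le> l/(2*u) + sqrt(l^2/(4*u^2) + c/u)"
proof -
  define r where "r = sqrt(l^2/(4*u^2) + c/u)"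
  have q: "l^2/(4*u^2) + c/u \<ge> 0" using assms by (intro add_nonneg_nonneg divide_nonneg_nonneg) auto
  have r2: "r^2 = l^2/(4*u^2) + c/u" unfolding r_def using real_sqrt_pow2[OF q] by simp
  have "l^2/(4*u^2) = (l/(2*u))^2" by (simp add: power_divide power_mult_distrib)
  hence "sqrt(l^2/(4*u^2)) = l/(2*u)" using assms by simp
  moreover have "sqrt(l^2/(4*u^2)) \<le> r" unfolding r_def using assms by (intro real_sqrt_le_mono) simp
  ultimately have rl: "l/(2*u) \<le> r" by simp
  have r0: "r \<ge> 0" unfolding r_def using q by simp
  have id: "u*s^2 - l*s - c = u*((s - l/(2*u))^2 - r^2)" unfolding r2 using assms
    by (simp add: field_simps power2_eq_square)
  have "u*s^2 - l*s - c \<le> 0 \<longleftrightarrow> (s - l/(2*u))^2 \<le> r^2"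
    unfolding id using assms(1) by (simp add: mult_le_0_iff)
  also have "\<dots> \<longleftrightarrow> \<bar>s - l/(2*u)\<bar> \<le> r" using r0
    by (metis abs_le_square_iff abs_of_nonneg)
  also have "\<dots> \<longleftrightarrow> s - l/(2*u) \<le> r" using rl assms by (auto simp: abs_if)
  finally show ?thesis unfolding r_def by linarith
qed

lemma downclosed:
  fixes L :: "nat set"
  assumes "L \<subseteq> {1..m}" "\<forall>l\<in>L. \<forall>q. 1 \<le> q \<and> q \<le> l \<longrightarrow> q \<in> L"
  shows "L = {1..card L}"
proof (cases "L = {}")
  case True then show ?thesis by simp
next
  case False
  have fin: "finite L" using assms(1) finite_subset by blast
  define n where "n = Max L"
  have nL: "n \<in> L" using fin False n_def by simp
  have "L = {1..n}"
  proof
    show "L \<subseteq> {1..n}" using assms(1) fin n_def by auto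
    show "{1..n} \<subseteq> L" using assms(2) nL by auto
  qed
  then show ?thesis by simp
qed


definition Xf :: "real \<Rightarrow> nat \<Rightarrow> (nat \<Rightarrow> real) \<Rightarrow> real \<Rightarrow> real" where
  "Xf \<alpha> m p t = lambda_alpha \<alpha> / (2 * (1 - t))
        + sqrt ((lambda_alpha \<alpha>)\<^sup>2 / (4 * (1 - t)\<^sup>2)
                + (real m - real (i_count p {1..m} t)) / (1 - t))"

definition zeta :: "real \<Rightarrow> nat \<Rightarrow> (nat \<Rightarrow> real) \<Rightarrow> (nat \<Rightarrow> nat) \<Rightarrow> nat \<Rightarrow> int" where
  "zeta \<alpha> m p \<sigma> k = min (int k) \<lfloor>real (m0_hat \<alpha> m p) * p (\<sigma> k)
                 + sqrt (real (m0_hat \<alpha> m p)) * lambda_alpha \<alpha>\<rfloor>"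

lemma m0_eq: "m0_hat \<alpha> m p = min m (Inf {nat \<lfloor>(Xf \<alpha> m p t)\<^sup>2\<rfloor> | t. 0 \<le> t \<and> t < 1})"
  unfolding m0_hat_def Xf_def by simp

lemma m0_le_m: "m0_hat \<alpha> m p \<le> m"
  unfolding m0_eq by simp

lemma m0_set_ne: "{nat \<lfloor>(Xf \<alpha> m p t)\<^sup>2\<rfloor> | t. 0 \<le> t \<and> t < 1} \<noteq> {}"
  by auto

lemma m0_le_X:
  assumes "0 \<le> t" "t < 1"
  shows "real (m0_hat \<alpha> m p) \<le> (Xf \<alpha> m p t)\<^sup>2"
proof -
  have "Inf {nat \<lfloor>(Xf \<alpha> m p t)\<^sup>2\<rfloor> | t. 0 \<le> t \<and> t < 1} \<le> nat \<lfloor>(Xf \<alpha> m p t)\<^sup>2\<rfloor>"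
    using assms by (intro cInf_lower) auto
  then have "m0_hat \<alpha> m p \<le> nat \<lfloor>(Xf \<alpha> m p t)\<^sup>2\<rfloor>" unfolding m0_eq by linarith
  then have "real (m0_hat \<alpha> m p) \<le> real (nat \<lfloor>(Xf \<alpha> m p t)\<^sup>2\<rfloor>)" by linarith
  also have "\<dots> \<le> (Xf \<alpha> m p t)\<^sup>2" by simp
  finally show ?thesis .
qed

lemma le_m0:
  assumes "a \<le> m" "\<forall>t. 0 \<le> t \<and> t < 1 \<longrightarrow> real a \<le> (Xf \<alpha> m p t)\<^sup>2"
  shows "a \<le> m0_hat \<alpha> m p"
proof -
  have "Inf {nat \<lfloor>(Xf \<alpha> m p t)\<^sup>2\<rfloor> | t. 0 \<le> t \<and> t < 1} \<in> {nat \<lfloor>(Xf \<alpha> m p t)\<^sup>2\<rfloor> | t. 0 \<le> t \<and> t < 1}"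
    using m0_set_ne by (rule Inf_nat_def1)
  then obtain t where t: "0 \<le> t" "t < 1" "Inf {nat \<lfloor>(Xf \<alpha> m p t)\<^sup>2\<rfloor> | t. 0 \<le> t \<and> t < 1} = nat \<lfloor>(Xf \<alpha> m p t)\<^sup>2\<rfloor>"
    by auto
  have "a \<le> nat \<lfloor>(Xf \<alpha> m p t)\<^sup>2\<rfloor>" using assms(2) t by (intro le_nat_floor) auto
  then show ?thesis unfolding m0_eq using t assms(1) by simp
qed

lemma m0_attain:
  assumes "m0_hat \<alpha> m p < m"
  shows "\<exists>t. 0 \<le> t \<and> t < 1 \<and> (Xf \<alpha> m p t)\<^sup>2 < real (m0_hat \<alpha> m p) + 1"
proof -
  have "Inf {nat \<lfloor>(Xf \<alpha> m p t)\<^sup>2\<rfloor> | t. 0 \<le> t \<and> t < 1} \<in> {nat \<lfloor>(Xf \<alpha> m p t)\<^sup>2\<rfloor> | t. 0 \<le> t \<and> t < 1}"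
    using m0_set_ne by (rule Inf_nat_def1)
  then obtain t where t: "0 \<le> t" "t < 1" "Inf {nat \<lfloor>(Xf \<alpha> m p t)\<^sup>2\<rfloor> | t. 0 \<le> t \<and> t < 1} = nat \<lfloor>(Xf \<alpha> m p t)\<^sup>2\<rfloor>"
    by auto
  have "m0_hat \<alpha> m p = nat \<lfloor>(Xf \<alpha> m p t)\<^sup>2\<rfloor>" using assms unfolding m0_eq t(3) by linarith
  then have "(Xf \<alpha> m p t)\<^sup>2 < real (m0_hat \<alpha> m p) + 1" by linarith
  then show ?thesis using t by blast
qed

lemma card_split:
  assumes "finite B"
  shows "card B = card {j\<in>B. P j} + card {j\<in>B. \<not> P j}"
proof -
  have "B = {j\<in>B. P j} \<union> {j\<in>B. \<not> P j}" by auto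
  then have "card B = card ({j\<in>B. P j} \<union> {j\<in>B. \<not> P j})" by simp
  also have "\<dots> = card {j\<in>B. P j} + card {j\<in>B. \<not> P j}"
    using assms by (intro card_Un_disjoint) auto
  finally show ?thesis .
qed

lemma lam_nonneg: "0 < \<alpha> \<Longrightarrow> \<alpha> \<le> 1 \<Longrightarrow> lambda_alpha \<alpha> \<ge> 0"
  unfolding lambda_alpha_def by simp

lemma icount_le: "i_count p {1..m} t \<le> m"
proof -
  have "i_count p {1..m} t \<le> card {1..m}" unfolding i_count_def by (intro card_mono) auto
  then show ?thesis by simp
qed

lemma Xf_nonneg: "0 < \<alpha> \<Longrightarrow> \<alpha> \<le> 1 \<Longrightarrow> t < 1 \<Longrightarrow> Xf \<alpha> m p t \<ge> 0"
  unfolding Xf_def using lam_nonneg[of \<alpha>] icount_le[of p m t] by (intro add_nonneg_nonneg divide_nonneg_nonneg) auto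



lemma quad_fwd:
  assumes "0 < \<alpha>" "\<alpha> \<le> 1" "0 \<le> t" "t < 1"
    and "real a - (real m - real (i_count p {1..m} t)) \<le> real a * t + sqrt (real a) * lambda_alpha \<alpha>"
  shows "real a \<le> (Xf \<alpha> m p t)\<^sup>2"
proof -
  define s where "s = sqrt (real a)"
  have s2: "s^2 = real a" unfolding s_def by simp
  have "(1-t)*s^2 - lambda_alpha \<alpha> * s - (real m - real (i_count p {1..m} t)) \<le> 0"
    using assms(5) unfolding s2 s_def by (simp add: algebra_simps)
  then have "s \<le> Xf \<alpha> m p t" unfolding Xf_def
    using quad_le[of "1-t" "real m - real (i_count p {1..m} t)" "lambda_alpha \<alpha>" s] assms
      lam_nonneg[of \<alpha>] icount_le[of p m t] unfolding s_def by simp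
  then have "s^2 \<le> (Xf \<alpha> m p t)^2" unfolding s_def by (intro power_mono) auto
  then show ?thesis using s2 by simp
qed

lemma quad_bwd:
  assumes "0 < \<alpha>" "\<alpha> \<le> 1" "0 \<le> t" "t < 1"
    and "real a \<le> (Xf \<alpha> m p t)\<^sup>2"
  shows "real a - (real m - real (i_count p {1..m} t)) \<le> real a * t + sqrt (real a) * lambda_alpha \<alpha>"
proof -
  define s where "s = sqrt (real a)"
  have s2: "s^2 = real a" unfolding s_def by simp
  have "s \<le> sqrt ((Xf \<alpha> m p t)\<^sup>2)" unfolding s_def using assms(5) by (intro real_sqrt_le_mono)
  also have "\<dots> = Xf \<alpha> m p t" using Xf_nonneg[OF assms(1,2,4)] by simp
  finally have "s \<le> Xf \<alpha> m p t" .
  then have "(1-t)*s^2 - lambda_alpha \<alpha> * s - (real m - real (i_count p {1..m} t)) \<le> 0"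
    unfolding Xf_def
    using quad_le[of "1-t" "real m - real (i_count p {1..m} t)" "lambda_alpha \<alpha>" s] assms
      lam_nonneg[of \<alpha>] icount_le[of p m t] unfolding s_def by simp
  then show ?thesis unfolding s2 s_def by (simp add: algebra_simps)
qed

context
  fixes \<alpha> :: real and m :: nat and p :: "nat \<Rightarrow> real" and \<sigma> :: "nat \<Rightarrow> nat"
  assumes a0: "0 < \<alpha>" and a1: "\<alpha> \<le> 1"
    and pr: "\<forall>j\<in>{1..m}. 0 \<le> p j \<and> p j \<le> 1"
    and bij: "bij_betw \<sigma> {1..m} {1..m}"
    and mono: "\<forall>k l. 1 \<le> k \<and> k \<le> l \<and> l \<le> m \<longrightarrow> p (\<sigma> k) \<le> p (\<sigma> l)"
begin

lemma sortedI: "\<sigma> ` {1..i_count p {1..m} t} = {j\<in>{1..m}. p j \<le> t}"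
proof -
  define L where "L = {l\<in>{1..m}. p (\<sigma> l) \<le> t}"
  have img: "\<sigma> ` {1..m} = {1..m}" and inj: "inj_on \<sigma> {1..m}" using bij unfolding bij_betw_def by auto
  have SL: "\<sigma> ` L = {j\<in>{1..m}. p j \<le> t}"
  proof
    show "\<sigma> ` L \<subseteq> {j\<in>{1..m}. p j \<le> t}" unfolding L_def using img by auto
    show "{j\<in>{1..m}. p j \<le> t} \<subseteq> \<sigma> ` L"
    proof
      fix j assume j: "j \<in> {j\<in>{1..m}. p j \<le> t}"
      then obtain l where "l \<in> {1..m}" "j = \<sigma> l" using img by (metis (no_types, lifting) imageE mem_Collect_eq)
      then show "j \<in> \<sigma> ` L" using j unfolding L_def by auto
    qed
  qed
  have cL: "card L = i_count p {1..m} t" unfolding i_count_def SL[symmetric]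
    using inj unfolding L_def by (intro card_image[symmetric]) (auto intro: inj_on_subset)
  have "L = {1..card L}"
  proof (rule downclosed)
    show "L \<subseteq> {1..m}" unfolding L_def by auto
    show "\<forall>l\<in>L. \<forall>q. 1 \<le> q \<and> q \<le> l \<longrightarrow> q \<in> L"
      unfolding L_def using mono by (auto intro: order_trans)
  qed
  then show ?thesis using SL cL by simp
qed

lemma sigma_in: "k \<in> {1..m} \<Longrightarrow> \<sigma> k \<in> {1..m}"
  using bij bij_betwE by blast

lemma sortedk: "k \<in> {1..m} \<Longrightarrow> \<sigma> ` {1..k} \<subseteq> {j\<in>{1..m}. p j \<le> p (\<sigma> k)}"
  using mono sigma_in by auto

lemma count_lower:
  assumes "A \<subseteq> {1..m}"
  shows "real (card A) - (real m - real (i_count p {1..m} t)) \<le> real (i_count p A t)"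
proof -
  have fA: "finite A" using assms finite_subset by blast
  have "card A = i_count p A t + card {j\<in>A. \<not> p j \<le> t}"
    unfolding i_count_def using fA by (rule card_split)
  moreover have "card {1..m} = i_count p {1..m} t + card {j\<in>{1..m}. \<not> p j \<le> t}"
    unfolding i_count_def by (rule card_split) simp
  moreover have "card {j\<in>A. \<not> p j \<le> t} \<le> card {j\<in>{1..m}. \<not> p j \<le> t}"
    using assms by (intro card_mono) auto
  ultimately show ?thesis by simp
qed


lemma bound_mono:
  assumes "a \<le> b" "0 \<le> q"
  shows "real a * q + sqrt (real a) * lambda_alpha \<alpha> \<le> real b * q + sqrt (real b) * lambda_alpha \<alpha>"
proof -
  have "real a * q \<le> real b * q" using assms by (intro mult_right_mono) auto
  moreover have "sqrt (real a) * lambda_alpha \<alpha> \<le> sqrt (real b) * lambda_alpha \<alpha>"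
    using assms lam_nonneg[OF a0 a1] by (intro mult_right_mono) auto
  ultimately show ?thesis by linarith
qed

lemma dir1:
  assumes A: "A \<subseteq> {1..m}" and nd0: "\<not> dkw_test \<alpha> p A"
  shows "card A \<le> m0_hat \<alpha> m p \<and> A \<in> JER_sets m {1..m} (\<lambda>k. \<sigma> ` {1..k}) (zeta \<alpha> m p \<sigma>)"
proof -
  have nd: "\<forall>t\<in>{0..1}. real (i_count p A t) \<le> real (card A) * t + sqrt (real (card A)) * lambda_alpha \<alpha>"
    using nd0 unfolding dkw_test_def by (auto simp: not_less)
  have cm: "card A \<le> m" using card_mono[OF _ A] by simp
  have c0: "card A \<le> m0_hat \<alpha> m p"
  proof (rule le_m0[OF cm], intro allI impI)
    fix t :: real assume t: "0 \<le> t \<and> t < 1"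
    show "real (card A) \<le> (Xf \<alpha> m p t)\<^sup>2"
    proof (rule quad_fwd[OF a0 a1])
      show "0 \<le> t" "t < 1" using t by auto
      have "real (i_count p A t) \<le> real (card A) * t + sqrt (real (card A)) * lambda_alpha \<alpha>"
        using nd t by auto
      then show "real (card A) - (real m - real (i_count p {1..m} t)) \<le> real (card A) * t + sqrt (real (card A)) * lambda_alpha \<alpha>"
        using count_lower[OF A, of t] by linarith
    qed
  qed
  have "\<forall>k\<in>{1..m}. int (card (\<sigma> ` {1..k} \<inter> A)) \<le> zeta \<alpha> m p \<sigma> k"
  proof
    fix k assume k: "k \<in> {1..m}"
    define q where "q = p (\<sigma> k)"
    have q01: "0 \<le> q" "q \<le> 1" unfolding q_def using pr sigma_in[OF k] by auto
    have "card (\<sigma> ` {1..k} \<inter> A) \<le> card (\<sigma> ` {1..k})" by (intro card_mono) auto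
    also have "\<dots> \<le> card {1..k}" by (rule card_image_le) simp
    finally have ck: "card (\<sigma> ` {1..k} \<inter> A) \<le> k" by simp
    have "card (\<sigma> ` {1..k} \<inter> A) \<le> i_count p A q"
      unfolding i_count_def q_def using sortedk[OF k] A finite_subset[OF A]
      by (intro card_mono) auto
    then have "real (card (\<sigma> ` {1..k} \<inter> A)) \<le> real (i_count p A q)" by simp
    also have "\<dots> \<le> real (card A) * q + sqrt (real (card A)) * lambda_alpha \<alpha>" using nd q01 by auto
    also have "\<dots> \<le> real (m0_hat \<alpha> m p) * q + sqrt (real (m0_hat \<alpha> m p)) * lambda_alpha \<alpha>"
      using bound_mono[OF c0 q01(1)] .
    finally have "int (card (\<sigma> ` {1..k} \<inter> A)) \<le> \<lfloor>real (m0_hat \<alpha> m p) * q + sqrt (real (m0_hat \<alpha> m p)) * lambda_alpha \<alpha>\<rfloor>"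
      by (simp add: le_floor_iff)
    then show "int (card (\<sigma> ` {1..k} \<inter> A)) \<le> zeta \<alpha> m p \<sigma> k"
      unfolding zeta_def q_def using ck by simp
  qed
  then show ?thesis using c0 A unfolding JER_sets_def by auto
qed


lemma jer_bound:
  assumes A: "A \<in> JER_sets m {1..m} (\<lambda>k. \<sigma> ` {1..k}) (zeta \<alpha> m p \<sigma>)" and t: "0 \<le> t"
  shows "real (i_count p A t) \<le> real (m0_hat \<alpha> m p) * t + sqrt (real (m0_hat \<alpha> m p)) * lambda_alpha \<alpha>"
proof -
  define k where "k = i_count p {1..m} t"
  have Asub: "A \<subseteq> {1..m}" and adm: "\<forall>k\<in>{1..m}. int (card (\<sigma> ` {1..k} \<inter> A)) \<le> zeta \<alpha> m p \<sigma> k"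
    using A unfolding JER_sets_def by auto
  have R: "\<sigma> ` {1..k} = {j\<in>{1..m}. p j \<le> t}" unfolding k_def by (rule sortedI)
  have eq: "{j\<in>A. p j \<le> t} = \<sigma> ` {1..k} \<inter> A" unfolding R using Asub by auto
  have rhs0: "0 \<le> real (m0_hat \<alpha> m p) * t + sqrt (real (m0_hat \<alpha> m p)) * lambda_alpha \<alpha>"
    using t lam_nonneg[OF a0 a1] by simp
  show ?thesis
  proof (cases "k = 0")
    case True
    then show ?thesis using rhs0 unfolding i_count_def eq by simp
  next
    case False
    then have k: "k \<in> {1..m}" using icount_le[of p m t] unfolding k_def by auto
    have "\<sigma> k \<in> \<sigma> ` {1..k}" using k by auto
    then have pk: "p (\<sigma> k) \<le> t" unfolding R by auto
    have "int (card (\<sigma> ` {1..k} \<inter> A)) \<le> \<lfloor>real (m0_hat \<alpha> m p) * p (\<sigma> k) + sqrt (real (m0_hat \<alpha> m p)) * lambda_alpha \<alpha>\<rfloor>"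
      using adm k unfolding zeta_def by fastforce
    then have "real (card (\<sigma> ` {1..k} \<inter> A)) \<le> real (m0_hat \<alpha> m p) * p (\<sigma> k) + sqrt (real (m0_hat \<alpha> m p)) * lambda_alpha \<alpha>"
      by (simp add: le_floor_iff)
    also have "\<dots> \<le> real (m0_hat \<alpha> m p) * t + sqrt (real (m0_hat \<alpha> m p)) * lambda_alpha \<alpha>"
      using pk by (simp add: mult_left_mono)
    finally show ?thesis unfolding i_count_def eq .
  qed
qed

lemma dir2a:
  assumes A: "A \<in> JER_sets m {1..m} (\<lambda>k. \<sigma> ` {1..k}) (zeta \<alpha> m p \<sigma>)"
  shows "card A \<le> m0_hat \<alpha> m p"
proof -
  have Asub: "A \<subseteq> {1..m}" using A unfolding JER_sets_def by auto
  have cm: "card A \<le> m" using card_mono[OF _ Asub] by simp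
  show ?thesis
  proof (cases "m0_hat \<alpha> m p = m")
    case True then show ?thesis using cm by simp
  next
    case False
    then have "m0_hat \<alpha> m p < m" using m0_le_m[of \<alpha> m p] by simp
    then obtain t where t: "0 \<le> t" "t < 1" "(Xf \<alpha> m p t)\<^sup>2 < real (m0_hat \<alpha> m p) + 1"
      using m0_attain by blast
    define M where "M = m0_hat \<alpha> m p"
    have "\<not> real (Suc M) \<le> (Xf \<alpha> m p t)\<^sup>2" using t(3) unfolding M_def by simp
    then have q: "real (Suc M) - (real m - real (i_count p {1..m} t)) > real (Suc M) * t + sqrt (real (Suc M)) * lambda_alpha \<alpha>"
      using quad_fwd[OF a0 a1 t(1,2), of "Suc M" m p] by linarith
    have "real M * t + sqrt (real M) * lambda_alpha \<alpha> \<le> real (Suc M) * t + sqrt (real (Suc M)) * lambda_alpha \<alpha>"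
      using bound_mono[of M "Suc M" t] t by simp
    moreover have "real (i_count p A t) \<le> real M * t + sqrt (real M) * lambda_alpha \<alpha>"
      using jer_bound[OF A t(1)] unfolding M_def .
    moreover have "real (card A) - (real m - real (i_count p {1..m} t)) \<le> real (i_count p A t)"
      by (rule count_lower[OF Asub])
    ultimately have "real (card A) < real (Suc M)" using q by linarith
    then show ?thesis unfolding M_def by simp
  qed
qed

lemma ext_exists:
  assumes Asub: "A \<subseteq> {1..m}" and n: "card A \<le> n" "n \<le> m"
  shows "\<exists>l. 1 \<le> l \<and> l \<le> m+1 \<and> card (A \<union> \<sigma> ` {l..m}) = n"
proof -
  have fA: "finite A" using Asub finite_subset by blast
  have claim: "\<forall>n. card A \<le> n \<and> n \<le> card (A \<union> \<sigma> ` {m+1-j..m}) \<longrightarrow>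
      (\<exists>l. m+1-j \<le> l \<and> l \<le> m+1 \<and> card (A \<union> \<sigma> ` {l..m}) = n)" if "j \<le> m" for j
    using that
  proof (induction j)
    case 0
    then show ?case by auto
  next
    case (Suc j)
    show ?case
    proof (intro allI impI)
      fix n assume nn: "card A \<le> n \<and> n \<le> card (A \<union> \<sigma> ` {m+1-Suc j..m})"
      define l0 where "l0 = m - j"
      have l0: "m + 1 - Suc j = l0" "m + 1 - j = Suc l0" "l0 \<ge> 1" using Suc.prems unfolding l0_def by auto
      have ins: "{l0..m} = insert l0 {Suc l0..m}" using Suc.prems unfolding l0_def by auto
      have "card (A \<union> \<sigma> ` {l0..m}) = card (insert (\<sigma> l0) (A \<union> \<sigma> ` {Suc l0..m}))"
        unfolding ins by simp
      also have "\<dots> \<le> Suc (card (A \<union> \<sigma> ` {Suc l0..m}))"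
        using fA by (simp add: card_insert_if)
      finally have step: "card (A \<union> \<sigma> ` {l0..m}) \<le> Suc (card (A \<union> \<sigma> ` {Suc l0..m}))" .
      show "\<exists>l. m + 1 - Suc j \<le> l \<and> l \<le> m + 1 \<and> card (A \<union> \<sigma> ` {l..m}) = n"
      proof (cases "n \<le> card (A \<union> \<sigma> ` {Suc l0..m})")
        case True
        then obtain l where "m+1-j \<le> l \<and> l \<le> m+1 \<and> card (A \<union> \<sigma> ` {l..m}) = n"
          using Suc.IH Suc.prems nn unfolding l0 by auto
        then show ?thesis unfolding l0 by (intro exI[of _ l]) auto
      next
        case False
        then have "n = card (A \<union> \<sigma> ` {l0..m})" using nn step unfolding l0 by linarith
        then show ?thesis unfolding l0 using Suc.prems l0_def by (intro exI[of _ l0]) auto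
      qed
    qed
  qed
  have img: "\<sigma> ` {1..m} = {1..m}" using bij unfolding bij_betw_def by auto
  have "card (A \<union> \<sigma> ` {m+1-m..m}) = m" using img Asub by (simp add: Un_absorb1)
  then obtain l where "m+1-m \<le> l \<and> l \<le> m+1 \<and> card (A \<union> \<sigma> ` {l..m}) = n"
    using claim[of m] n by auto
  then show ?thesis by auto
qed


lemma dir2b:
  assumes A: "A \<in> JER_sets m {1..m} (\<lambda>k. \<sigma> ` {1..k}) (zeta \<alpha> m p \<sigma>)"
  shows "\<exists>A'. A \<subseteq> A' \<and> A' \<subseteq> {1..m} \<and> \<not> dkw_test \<alpha> p A'"
proof -
  define M where "M = m0_hat \<alpha> m p"
  have Asub: "A \<subseteq> {1..m}" using A unfolding JER_sets_def by auto
  obtain l where l: "1 \<le> l" "l \<le> m+1" "card (A \<union> \<sigma> ` {l..m}) = M"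
    using ext_exists[OF Asub dir2a[OF A] m0_le_m] unfolding M_def by blast
  define A' where "A' = A \<union> \<sigma> ` {l..m}"
  have img: "\<sigma> ` {1..m} = {1..m}" using bij unfolding bij_betw_def by auto
  have A'sub: "A' \<subseteq> {1..m}" unfolding A'_def using Asub l(1) img by auto
  have fA': "finite A'" using A'sub finite_subset by blast
  have cA': "card A' = M" unfolding A'_def using l(3) .
  have lam0: "lambda_alpha \<alpha> \<ge> 0" using lam_nonneg[OF a0 a1] .
  have "\<forall>t\<in>{0..1}. real (i_count p A' t) \<le> real (card A') * t + sqrt (real (card A')) * lambda_alpha \<alpha>"
  proof
    fix t :: real assume t: "t \<in> {0..1}"
    show "real (i_count p A' t) \<le> real (card A') * t + sqrt (real (card A')) * lambda_alpha \<alpha>"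
    proof (cases "t = 1")
      case True
      have "i_count p A' t \<le> card A'" unfolding i_count_def using fA' by (intro card_mono) auto
      moreover have "0 \<le> sqrt (real (card A')) * lambda_alpha \<alpha>" using lam0 by simp
      ultimately show ?thesis using True by simp
    next
      case False
      then have t1: "0 \<le> t" "t < 1" using t by auto
      show ?thesis
      proof (cases "\<exists>j\<in>\<sigma> ` {l..m}. p j \<le> t")
        case True
        then obtain l' where l': "l' \<in> {l..m}" "p (\<sigma> l') \<le> t" by auto
        have sub: "{j\<in>{1..m}. \<not> p j \<le> t} \<subseteq> A'"
        proof
          fix i assume i: "i \<in> {j\<in>{1..m}. \<not> p j \<le> t}"
          then obtain q where q: "q \<in> {1..m}" "i = \<sigma> q" using img by (metis (no_types, lifting) imageE mem_Collect_eq)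
          have "\<not> q \<le> l'"
          proof
            assume "q \<le> l'"
            then have "p (\<sigma> q) \<le> p (\<sigma> l')" using mono q l' by auto
            then show False using i q l' by auto
          qed
          then show "i \<in> A'" unfolding A'_def using q l' by auto
        qed
        have eqs: "{j\<in>A'. \<not> p j \<le> t} = {j\<in>{1..m}. \<not> p j \<le> t}" using sub A'sub by auto
        have "card A' = i_count p A' t + card {j\<in>A'. \<not> p j \<le> t}"
          unfolding i_count_def using fA' by (rule card_split)
        moreover have "card {1..m} = i_count p {1..m} t + card {j\<in>{1..m}. \<not> p j \<le> t}"
          unfolding i_count_def by (rule card_split) simp
        ultimately have "real (i_count p A' t) = real M - (real m - real (i_count p {1..m} t))"
          using eqs cA' by simp
        also have "\<dots> \<le> real M * t + sqrt (real M) * lambda_alpha \<alpha>"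
          using quad_bwd[OF a0 a1 t1 m0_le_X[OF t1]] unfolding M_def .
        finally show ?thesis using cA' by simp
      next
        case False
        then have "{j\<in>A'. p j \<le> t} = {j\<in>A. p j \<le> t}" unfolding A'_def by auto
        then have "i_count p A' t = i_count p A t" unfolding i_count_def by simp
        then show ?thesis using jer_bound[OF A t1(1)] cA' unfolding M_def by simp
      qed
    qed
  qed
  then have "\<not> dkw_test \<alpha> p A'" unfolding dkw_test_def by (auto simp: not_less)
  then show ?thesis using A'sub unfolding A'_def by blast
qed

theorem main_aux:
  assumes S: "S \<subseteq> {1..m}"
  shows "V_IP m (dkw_test \<alpha> p) S = V_JER m {1..m} (\<lambda>k. \<sigma> ` {1..k}) (zeta \<alpha> m p \<sigma>) S"
proof -
  define SI where "SI = {card (A \<inter> S) | A. A \<subseteq> {1..m} \<and> \<not> dkw_test \<alpha> p A}"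
  define SJ where "SJ = {card (S \<inter> A) | A. A \<in> JER_sets m {1..m} (\<lambda>k. \<sigma> ` {1..k}) (zeta \<alpha> m p \<sigma>)}"
  have bS: "card S \<le> m" using card_mono[OF _ S] by simp
  have fSI: "finite SI"
  proof (rule finite_subset[of _ "{0..m}"])
    have "card (A \<inter> S) \<le> m" for A using card_mono[OF _ Int_lower2[of A S]] bS finite_subset[OF S] by simp
    then show "SI \<subseteq> {0..m}" unfolding SI_def by auto
  qed simp
  have fSJ: "finite SJ"
  proof (rule finite_subset[of _ "{0..m}"])
    have "card (S \<inter> A) \<le> m" for A using card_mono[OF _ Int_lower1[of S A]] bS finite_subset[OF S] by simp
    then show "SJ \<subseteq> {0..m}" unfolding SJ_def by auto
  qed simp
  have e0: "\<not> dkw_test \<alpha> p {}" unfolding dkw_test_def i_count_def by simp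
  have neI: "SI \<noteq> {}" unfolding SI_def using e0 by blast
  have "{} \<in> JER_sets m {1..m} (\<lambda>k. \<sigma> ` {1..k}) (zeta \<alpha> m p \<sigma>)"
    unfolding JER_sets_def zeta_def using lam_nonneg[OF a0 a1] pr sigma_in by auto
  then have neJ: "SJ \<noteq> {}" unfolding SJ_def by blast
  have "Max SI \<in> SI" using fSI neI by simp
  then obtain A where A: "A \<subseteq> {1..m}" "\<not> dkw_test \<alpha> p A" "Max SI = card (A \<inter> S)" unfolding SI_def by auto
  have "card (S \<inter> A) \<in> SJ" unfolding SJ_def using dir1[OF A(1,2)] by blast
  then have le1: "Max SI \<le> Max SJ" using A(3) fSJ by (simp add: Int_commute)
  have "Max SJ \<in> SJ" using fSJ neJ by simp
  then obtain B where B: "B \<in> JER_sets m {1..m} (\<lambda>k. \<sigma> ` {1..k}) (zeta \<alpha> m p \<sigma>)" "Max SJ = card (S \<inter> B)"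
    unfolding SJ_def by auto
  obtain B' where B': "B \<subseteq> B'" "B' \<subseteq> {1..m}" "\<not> dkw_test \<alpha> p B'" using dir2b[OF B(1)] by blast
  have "card (B' \<inter> S) \<in> SI" unfolding SI_def using B' by blast
  then have "card (B' \<inter> S) \<le> Max SI" using fSI by simp
  moreover have "card (S \<inter> B) \<le> card (B' \<inter> S)" using B' finite_subset[OF B'(2)] by (intro card_mono) auto
  ultimately have le2: "Max SJ \<le> Max SI" using B(2) by simp
  show ?thesis unfolding V_IP_def V_JER_def SI_def[symmetric] SJ_def[symmetric] using le1 le2 by simp
qed

end

theorem mainTheorem12:
  fixes \<alpha> :: real and m :: nat and p :: "nat \<Rightarrow> real" and \<sigma> :: "nat \<Rightarrow> nat"
  assumes "0 < \<alpha>" and "\<alpha> \<le> 1"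
    and "\<forall>j\<in>{1..m}. 0 \<le> p j \<and> p j \<le> 1"
    and "bij_betw \<sigma> {1..m} {1..m}"
    and "\<forall>k l. 1 \<le> k \<and> k \<le> l \<and> l \<le> m \<longrightarrow> p (\<sigma> k) \<le> p (\<sigma> l)"
    and "S \<subseteq> {1..m}"
  shows "V_IP m (dkw_test \<alpha> p) S =
         V_JER m {1..m} (\<lambda>k. \<sigma> ` {1..k})
           (\<lambda>k. min (int k) \<lfloor>real (m0_hat \<alpha> m p) * p (\<sigma> k)
                 + sqrt (real (m0_hat \<alpha> m p)) * lambda_alpha \<alpha>\<rfloor>) S"
proof -
  have z: "(\<lambda>k. min (int k) \<lfloor>real (m0_hat \<alpha> m p) * p (\<sigma> k)
                 + sqrt (real (m0_hat \<alpha> m p)) * lambda_alpha \<alpha>\<rfloor>) = zeta \<alpha> m p \<sigma>"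
    by (simp add: fun_eq_iff zeta_def)
  show ?thesis unfolding z using main_aux[OF assms] .
qed

end
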